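(* Let $k\in\mathbb Z$, $\mathbb N_k=\{l\in\mathbb Z:l\le k\}$, and $\xi$ a random variable with $\mathbb P(\xi=l)=p_l$, $l\in\mathbb N_k$, $p_l\ge0$, $\sum_lp_l=1$, $p_k\in(0,1)$. Let $Z$ be the Markov chain on $\Omega_k$ described in the context. Then there is a constant $C>0$ such that, as $N\to\infty$, $$\sum_{n\in\Omega_k^0}P_\oplus(T_n<T_\oplus)=P_\oplus(T_A<T_\oplus)\big(1+O(e^{-CN})\big).$$
   Context: $\Omega_k=\{m\in\{0,\dots,N\}^{\mathbb N_k}:\sum_{i\in\mathbb N_k}m_i=N\}$, $\phi(m)=\sup\{i:m_i>0\}$. The chain $Z$ on $\Omega_k$ has the kernel: from state $m$, take any $x\in\mathbb Z^N$ with exactly $m_l$ coordinates equal to $l$ for each $l\in\mathbb N_k$, let $\{\xi_{i,j}:1\le i,j\le N\}$ be fresh i.i.d. copies of $\xi$, and let the next state be $\big(\#\{i\le N:\max_j(x_j+\xi_{i,j})=\phi(m)+l\}\big)_{l\in\mathbb N_k}$. $P_m$ refers to the chain started at $m$; $T_m=\inf\{t\ge1:Z(t)=m\}$; $\oplus\in\Omega_k$ is the state with $\oplus_k=N$ and all other coordinates $0$; $\Omega_k^0=\{m\in\Omega_k:m_k=0\}$; $T_A=\inf_{m\in\Omega_k^0}T_m$. *)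

theory Defs
  imports "HOL-Probability.Probability" "HOL-Library.Landau_Symbols"
begin

(* States m : int => nat are count vectors indexed by N_k = {l. l <= k},
   extended by 0 above k. *)
definition Omega :: "int \<Rightarrow> nat \<Rightarrow> (int \<Rightarrow> nat) set" where
  "Omega k N = {m. (\<forall>l. k < l \<longrightarrow> m l = 0) \<and> finite {l. m l \<noteq> 0}
                   \<and> (\<Sum>l\<in>{l. m l \<noteq> 0}. m l) = N}"

definition Omega0 :: "int \<Rightarrow> nat \<Rightarrow> (int \<Rightarrow> nat) set" where
  "Omega0 k N = {m \<in> Omega k N. m k = 0}"

definition oplus :: "int \<Rightarrow> nat \<Rightarrow> (int \<Rightarrow> nat)" where
  "oplus k N = (\<lambda>l. if l = k then N else 0)"

definition phi :: "(int \<Rightarrow> nat) \<Rightarrow> int" where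
  "phi m = Max {l. 0 < m l}"

definition config :: "nat \<Rightarrow> (int \<Rightarrow> nat) \<Rightarrow> nat \<Rightarrow> int" where
  "config N m = (SOME x. \<forall>l. card {j \<in> {..<N}. x j = l} = m l)"

definition step :: "int pmf \<Rightarrow> nat \<Rightarrow> (int \<Rightarrow> nat) \<Rightarrow> (int \<Rightarrow> nat) pmf" where
  "step xi N m = map_pmf
     (\<lambda>X. (\<lambda>l. card {i \<in> {..<N}. (MAX j\<in>{..<N}. config N m j + X (i, j)) = phi m + l}))
     (Pi_pmf ({..<N} \<times> {..<N}) 0 (\<lambda>_. xi))"

(* law of the path [Z(1), ..., Z(t)] under P_m *)
fun paths :: "('s \<Rightarrow> 's pmf) \<Rightarrow> 's \<Rightarrow> nat \<Rightarrow> 's list pmf" where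
  "paths K m 0 = return_pmf []"
| "paths K m (Suc t) = bind_pmf (K m) (\<lambda>m'. map_pmf (Cons m') (paths K m' t))"

(* P_m(T_A < T_b), where T_A = first time t >= 1 with Z(t) in A, T_b = first time t >= 1
   with Z(t) = b (inf {} = infinity); obtained as the increasing limit of the
   probabilities of {T_A <= t and T_A < T_b}. *)
definition hit_before :: "('s \<Rightarrow> 's pmf) \<Rightarrow> 's \<Rightarrow> 's set \<Rightarrow> 's \<Rightarrow> real" where
  "hit_before K m A b = (SUP t. measure_pmf.prob (paths K m t)
      {zs. \<exists>i<length zs. zs ! i \<in> A \<and> (\<forall>j\<le>i. zs ! j \<noteq> b)})"

end

theory Submission
  imports Defs
begin
definition hitset :: "'s set \<Rightarrow> 's \<Rightarrow> 's list set" where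
  "hitset A b = {zs. \<exists>i<length zs. zs ! i \<in> A \<and> (\<forall>j\<le>i. zs ! j \<noteq> b)}"

definition hitp :: "('s \<Rightarrow> 's pmf) \<Rightarrow> nat \<Rightarrow> 's \<Rightarrow> 's set \<Rightarrow> 's \<Rightarrow> real" where
  "hitp K t m A b = measure_pmf.prob (paths K m t) (hitset A b)"

lemma hit_before_hitp: "hit_before K m A b = (SUP t. hitp K t m A b)"
  unfolding hit_before_def hitp_def hitset_def ..

lemma all_le_Suc_iff: "(\<forall>j\<le>Suc i. Q j) = (Q 0 \<and> (\<forall>j\<le>i. Q (Suc j)))"
  by (metis Suc_le_mono le0 not0_implies_Suc)

lemma Cons_hitset: "(Cons m' -` hitset A b) =
   (if m' = b then {} else if m' \<in> A then UNIV else hitset A b)"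
proof -
  have "m' # zs \<in> hitset A b \<longleftrightarrow> (if m' = b then False else if m' \<in> A then True else zs \<in> hitset A b)" for zs
    unfolding hitset_def
    by (simp only: mem_Collect_eq length_Cons Ex_less_Suc2 all_le_Suc_iff nth_Cons_0 nth_Cons_Suc
          le0 all_le_Suc_iff) auto
  then show ?thesis by auto
qed

lemma int_bounded[intro]:
  fixes f :: "'s \<Rightarrow> real"
  assumes "\<And>x. \<bar>f x\<bar> \<le> B"
  shows "integrable (measure_pmf M) f"
  by (rule measure_pmf.integrable_const_bound[where B=B]) (use assms in auto)

lemma measure_bind_pmf': "measure_pmf.prob (bind_pmf M N) X = measure_pmf.expectation M (\<lambda>x. measure_pmf.prob (N x) X)"
proof -
  have "ennreal (measure_pmf.prob (bind_pmf M N) X) = emeasure (bind_pmf M N) X"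
    by (simp add: measure_pmf.emeasure_eq_measure)
  also have "\<dots> = (\<integral>\<^sup>+x. emeasure (N x) X \<partial>M)"
    by simp
  also have "\<dots> = (\<integral>\<^sup>+x. ennreal (measure_pmf.prob (N x) X) \<partial>M)"
    by (simp add: measure_pmf.emeasure_eq_measure)
  also have "\<dots> = ennreal (measure_pmf.expectation M (\<lambda>x. measure_pmf.prob (N x) X))"
    by (rule nn_integral_eq_integral) (auto intro!: int_bounded[where B=1])
  finally show ?thesis by (simp add: integral_nonneg)
qed

lemma hitp_0[simp]: "hitp K 0 m A b = 0"
  by (simp add: hitp_def hitset_def)

lemma hitp_Suc: "hitp K (Suc t) m A b =
  measure_pmf.expectation (K m) (\<lambda>m'. if m' = b then 0 else if m' \<in> A then 1 else hitp K t m' A b)"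
proof -
  have "hitp K (Suc t) m A b = measure_pmf.expectation (K m)
          (\<lambda>m'. measure_pmf.prob (map_pmf (Cons m') (paths K m' t)) (hitset A b))"
    by (simp add: hitp_def measure_bind_pmf')
  also have "\<dots> = measure_pmf.expectation (K m) (\<lambda>m'. if m' = b then 0 else if m' \<in> A then 1 else hitp K t m' A b)"
    by (intro Bochner_Integration.integral_cong refl) (simp add: Cons_hitset hitp_def)
  finally show ?thesis .
qed

lemma hitp_nonneg: "0 \<le> hitp K t m A b" by (simp add: hitp_def)
lemma hitp_le1: "hitp K t m A b \<le> 1" by (simp add: hitp_def)

lemma hitp_mono_Suc: "hitp K t m A b \<le> hitp K (Suc t) m A b"
proof (induction t arbitrary: m)
  case 0 then show ?case by (simp add: hitp_nonneg)
next
  case (Suc t)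
  have e1: "hitp K (Suc (Suc t)) m A b = measure_pmf.expectation (K m)
     (\<lambda>m'. if m' = b then 0 else if m' \<in> A then 1 else hitp K (Suc t) m' A b)"
    by (rule hitp_Suc)
  have e2: "hitp K (Suc t) m A b = measure_pmf.expectation (K m)
     (\<lambda>m'. if m' = b then 0 else if m' \<in> A then 1 else hitp K t m' A b)"
    by (rule hitp_Suc)
  show ?case
    unfolding e1 e2
    apply (rule integral_mono)
    apply (rule int_bounded[where B=1], simp add: hitp_nonneg hitp_le1 abs_le_iff)
    apply (rule int_bounded[where B=1], simp add: hitp_nonneg hitp_le1 abs_le_iff)
    using Suc by auto
qed

lemma hitp_incseq: "incseq (\<lambda>t. hitp K t m A b)"
  by (rule incseq_SucI) (rule hitp_mono_Suc)

lemma hitp_lim: "(\<lambda>t. hitp K t m A b) \<longlonglongrightarrow> hit_before K m A b"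
  unfolding hit_before_hitp
  by (rule LIMSEQ_incseq_SUP) (auto simp: bdd_above_def hitp_le1 hitp_incseq intro!: exI[of _ 1])

lemma hitp_le_hit_before: "hitp K t m A b \<le> hit_before K m A b"
  by (rule incseq_le[OF hitp_incseq hitp_lim])

primrec Vf :: "('s \<Rightarrow> 's pmf) \<Rightarrow> 's set \<Rightarrow> 's \<Rightarrow> nat \<Rightarrow> 's \<Rightarrow> real" where
  "Vf K A b 0 m = 0"
| "Vf K A b (Suc t) m = measure_pmf.expectation (K m)
      (\<lambda>m'. if m' = b then 0 else indicator A m' + Vf K A b t m')"

lemma Vf_bounds: "0 \<le> Vf K A b t m \<and> Vf K A b t m \<le> real t"
proof (induction t arbitrary: m)
  case 0 then show ?case by simp
next
  case (Suc t)
  have pw: "0 \<le> (if x = b then 0 else indicator A x + Vf K A b t x) \<and>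
     (if x = b then 0 else indicator A x + Vf K A b t x) \<le> 1 + real t" for x
  proof -
    have ih: "0 \<le> Vf K A b t x" "Vf K A b t x \<le> real t" using Suc.IH by auto
    then show ?thesis by (auto simp: indicator_def)
  qed
  have i: "integrable (measure_pmf (K m)) (\<lambda>m'. if m' = b then 0 else indicator A m' + Vf K A b t m')"
    by (rule int_bounded[where B="1 + real t"]) (use pw in \<open>auto simp: abs_le_iff\<close>)
  have "Vf K A b (Suc t) m \<le> measure_pmf.expectation (K m) (\<lambda>_. 1 + real t)"
    unfolding Vf.simps by (rule integral_mono[OF i]) (use pw in auto)
  moreover have "0 \<le> Vf K A b (Suc t) m"
    unfolding Vf.simps by (rule Bochner_Integration.integral_nonneg) (use pw in auto)
  ultimately show ?case by simp
qed

lemma Vf_int: "integrable (measure_pmf (K m)) (\<lambda>m'. if m' = b then 0 else indicator A m' + Vf K A b t m')"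
proof (rule int_bounded[where B="1 + real t"])
  fix x
  have ih: "0 \<le> Vf K A b t x" "Vf K A b t x \<le> real t" using Vf_bounds[of K A b t x] by auto
  then show "\<bar>if x = b then 0 else indicator A x + Vf K A b t x\<bar> \<le> 1 + real t"
    by (auto simp: indicator_def)
qed

lemma hitp_int: "integrable (measure_pmf (K m)) (\<lambda>m'. if m' = b then 0 else if m' \<in> A then 1 else hitp K t m' A b)"
  by (rule int_bounded[where B=1]) (auto simp: hitp_nonneg hitp_le1 abs_le_iff)

lemma sum_hitp_le_Vf:
  assumes "finite F" "F \<subseteq> A"
  shows "(\<Sum>n\<in>F. hitp K t m {n} b) \<le> Vf K A b t m"
proof (induction t arbitrary: m)
  case 0 then show ?case by simp
next
  case (Suc t)
  have "(\<Sum>n\<in>F. hitp K (Suc t) m {n} b) = (\<Sum>n\<in>F. measure_pmf.expectation (K m)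
      (\<lambda>m'. if m' = b then 0 else if m' \<in> {n} then 1 else hitp K t m' {n} b))"
    by (simp only: hitp_Suc)
  also have "\<dots> = measure_pmf.expectation (K m) (\<lambda>m'. \<Sum>n\<in>F.
      (if m' = b then 0 else if m' \<in> {n} then 1 else hitp K t m' {n} b))"
    by (rule Bochner_Integration.integral_sum[symmetric]) (rule hitp_int)
  also have "\<dots> \<le> measure_pmf.expectation (K m) (\<lambda>m'. if m' = b then 0 else indicator A m' + Vf K A b t m')"
  proof (rule integral_mono)
    show "integrable (measure_pmf (K m)) (\<lambda>m'. \<Sum>n\<in>F. (if m' = b then 0 else if m' \<in> {n} then 1 else hitp K t m' {n} b))"
      by (intro Bochner_Integration.integrable_sum hitp_int)
    show "integrable (measure_pmf (K m)) (\<lambda>m'. if m' = b then 0 else indicator A m' + Vf K A b t m')" by (rule Vf_int)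
    fix m'
    show "(\<Sum>n\<in>F. (if m' = b then 0 else if m' \<in> {n} then 1 else hitp K t m' {n} b))
       \<le> (if m' = b then 0 else indicator A m' + Vf K A b t m')"
    proof (cases "m' = b")
      case False
      have "(\<Sum>n\<in>F. (if m' \<in> {n} then 1 else hitp K t m' {n} b))
          \<le> (\<Sum>n\<in>F. (if m' = n then 1 else 0) + hitp K t m' {n} b)"
        by (intro sum_mono) (auto simp: hitp_nonneg)
      also have "\<dots> = (\<Sum>n\<in>F. (if m' = n then 1 else 0)) + (\<Sum>n\<in>F. hitp K t m' {n} b)"
        by (simp add: sum.distrib)
      also have "(\<Sum>n\<in>F. (if m' = n then 1 else 0::real)) = indicator F m'"
        using assms(1) by (simp add: sum.delta indicator_def)
      also have "\<dots> \<le> indicator A m'" using assms(2) by (auto simp: indicator_def)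
      finally show ?thesis using False Suc.IH[of m'] by simp
    qed simp
  qed
  also have "\<dots> = Vf K A b (Suc t) m" by simp
  finally show ?case .
qed

lemma hitp_le_finite_sums:
  assumes "\<And>F. finite F \<Longrightarrow> F \<subseteq> A \<Longrightarrow> (\<Sum>n\<in>F. hitp K t m {n} b) \<le> c"
  shows "hitp K t m A b \<le> c"
proof -
  let ?M = "paths K m t"
  have "hitp K t m A b = infsum (pmf ?M) (hitset A b)"
    unfolding hitp_def measure_pmf_conv_infsetsum by (rule infsetsum_infsum) (rule pmf_abs_summable)
  also have "\<dots> \<le> c"
  proof (rule infsum_le_finite_sums)
    show "pmf ?M summable_on hitset A b"
      using pmf_abs_summable abs_summable_summable abs_summable_equivalent by blast
    fix Z assume Z: "finite Z" "Z \<subseteq> hitset A b"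
    define F where "F = (\<Union>zs\<in>Z. {n \<in> A \<inter> set zs. zs \<in> hitset {n} b})"
    have fF: "finite F" unfolding F_def using Z(1) by auto
    have FA: "F \<subseteq> A" unfolding F_def by auto
    have ZU: "Z \<subseteq> (\<Union>n\<in>F. hitset {n} b)"
    proof
      fix zs assume zs: "zs \<in> Z"
      then obtain i where i: "i < length zs" "zs ! i \<in> A" "\<forall>j\<le>i. zs ! j \<noteq> b"
        using Z(2) by (auto simp: hitset_def)
      have "zs ! i \<in> F" unfolding F_def using zs i
        by (auto simp: hitset_def intro!: bexI[of _ zs] exI[of _ i])
      moreover have "zs \<in> hitset {zs ! i} b" using i by (auto simp: hitset_def)
      ultimately show "zs \<in> (\<Union>n\<in>F. hitset {n} b)" by blast
    qed
    have "sum (pmf ?M) Z = measure_pmf.prob ?M Z" using Z(1) by (simp add: measure_measure_pmf_finite)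
    also have "\<dots> \<le> measure_pmf.prob ?M (\<Union>n\<in>F. hitset {n} b)"
      by (rule measure_pmf.finite_measure_mono) (use ZU in auto)
    also have "\<dots> \<le> (\<Sum>n\<in>F. measure_pmf.prob ?M (hitset {n} b))"
      by (rule measure_pmf.finite_measure_subadditive_finite) (use fF in auto)
    also have "\<dots> = (\<Sum>n\<in>F. hitp K t m {n} b)" by (simp add: hitp_def)
    also have "\<dots> \<le> c" by (rule assms[OF fF FA])
    finally show "sum (pmf ?M) Z \<le> c" .
  qed
  finally show ?thesis .
qed

locale inv_chain =
  fixes K :: "'s \<Rightarrow> 's pmf" and \<Omega> :: "'s set"
  assumes closed: "\<And>m. m \<in> \<Omega> \<Longrightarrow> set_pmf (K m) \<subseteq> \<Omega>"
begin

lemma Vf_le_lyap: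
  assumes g: "\<And>m. m \<in> \<Omega> \<Longrightarrow> 0 \<le> g m"
    "\<And>m. m \<in> \<Omega> \<Longrightarrow> integrable (measure_pmf (K m)) g"
    "\<And>m. m \<in> \<Omega> \<Longrightarrow> measure_pmf.expectation (K m) (\<lambda>m'. if m' = b then 0 else indicator A m' + g m') \<le> g m"
  shows "m \<in> \<Omega> \<Longrightarrow> Vf K A b t m \<le> g m"
proof (induction t arbitrary: m)
  case 0 then show ?case using g(1) by simp
next
  case (Suc t)
  have i2: "integrable (measure_pmf (K m)) (\<lambda>m'. if m' = b then 0 else indicator A m' + g m')"
  proof -
    show ?thesis
      apply (rule Bochner_Integration.integrable_bound[where f="\<lambda>m'. 1 + g m'"])
        apply (rule Bochner_Integration.integrable_add, simp, rule g(2)[OF Suc.prems])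
       apply simp
      apply (rule AE_pmfI)
      using g(1) closed[OF Suc.prems] by (auto simp: indicator_def)
  qed
  have "Vf K A b (Suc t) m \<le> measure_pmf.expectation (K m) (\<lambda>m'. if m' = b then 0 else indicator A m' + g m')"
    unfolding Vf.simps
    by (rule integral_mono_AE[OF Vf_int[of K m b A t] i2]) (use Suc.IH closed[OF Suc.prems] in \<open>auto intro!: AE_pmfI\<close>)
  also have "\<dots> \<le> g m" by (rule g(3)[OF Suc.prems])
  finally show ?case .
qed

lemma Vf_le_hitp:
  assumes G: "0 \<le> G" "\<And>t m. m \<in> \<Omega> \<Longrightarrow> Vf K A b t m \<le> G"
  shows "m \<in> \<Omega> \<Longrightarrow> Vf K A b t m \<le> (1 + G) * hitp K t m A b"
proof (induction t arbitrary: m)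
  case 0 then show ?case by simp
next
  case (Suc t)
  have "Vf K A b (Suc t) m \<le> measure_pmf.expectation (K m)
       (\<lambda>m'. (1 + G) * (if m' = b then 0 else if m' \<in> A then 1 else hitp K t m' A b))"
    unfolding Vf.simps
  proof (rule integral_mono_AE[OF Vf_int[of K m b A t]])
    show "integrable (measure_pmf (K m)) (\<lambda>m'. (1 + G) * (if m' = b then 0 else if m' \<in> A then 1 else hitp K t m' A b))"
      by (intro integrable_mult_right hitp_int)
    show "AE m' in measure_pmf (K m). (if m' = b then 0 else indicator A m' + Vf K A b t m')
       \<le> (1 + G) * (if m' = b then 0 else if m' \<in> A then 1 else hitp K t m' A b)"
      by (rule AE_pmfI) (use Suc.IH closed[OF Suc.prems] G(2) in \<open>auto simp: indicator_def\<close>)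
  qed
  also have "\<dots> = (1 + G) * hitp K (Suc t) m A b" by (simp add: hitp_Suc)
  finally show ?case .
qed

end

lemma hit_before_nonneg: "0 \<le> hit_before K m A b"
  using hitp_le_hit_before[of K 0 m A b] by simp

context inv_chain begin

lemma sum_bound:
  assumes G: "0 \<le> G" "\<And>t m. m \<in> \<Omega> \<Longrightarrow> Vf K A b t m \<le> G" and m: "m \<in> \<Omega>"
  shows "(\<lambda>n. hit_before K m {n} b) summable_on A \<and>
         hit_before K m A b \<le> (\<Sum>\<^sub>\<infinity>n\<in>A. hit_before K m {n} b) \<and>
         (\<Sum>\<^sub>\<infinity>n\<in>A. hit_before K m {n} b) \<le> (1 + G) * hit_before K m A b"
proof -
  let ?H = "hit_before K m A b"
  let ?f = "\<lambda>n. hit_before K m {n} b"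
  have fin: "sum ?f F \<le> (1 + G) * ?H" if F: "finite F" "F \<subseteq> A" for F
  proof -
    have lim: "(\<lambda>t. \<Sum>n\<in>F. hitp K t m {n} b) \<longlonglongrightarrow> sum ?f F"
      by (intro tendsto_sum hitp_lim)
    have "\<forall>t. (\<Sum>n\<in>F. hitp K t m {n} b) \<le> (1 + G) * ?H"
    proof
      fix t
      have "(\<Sum>n\<in>F. hitp K t m {n} b) \<le> Vf K A b t m" by (rule sum_hitp_le_Vf[OF F])
      also have "\<dots> \<le> (1 + G) * hitp K t m A b" by (rule Vf_le_hitp[OF G m])
      also have "\<dots> \<le> (1 + G) * ?H" using G(1) hitp_le_hit_before by (intro mult_left_mono) auto
      finally show "(\<Sum>n\<in>F. hitp K t m {n} b) \<le> (1 + G) * ?H" .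
    qed
    then show ?thesis by (intro LIMSEQ_le_const2[OF lim]) auto
  qed
  have summ: "?f summable_on A"
    by (rule nonneg_bdd_above_summable_on) (use fin hit_before_nonneg in \<open>auto simp: bdd_above_def\<close>)
  have up: "infsum ?f A \<le> (1 + G) * ?H"
    by (rule infsum_le_finite_sums[OF summ fin])
  have low: "?H \<le> infsum ?f A"
  proof (rule LIMSEQ_le_const2[OF hitp_lim], intro allI exI impI)
    fix t
    show "hitp K t m A b \<le> infsum ?f A"
    proof (rule hitp_le_finite_sums)
      fix F assume F: "finite F" "F \<subseteq> A"
      have "(\<Sum>n\<in>F. hitp K t m {n} b) \<le> sum ?f F" by (intro sum_mono hitp_le_hit_before)
      also have "\<dots> \<le> infsum ?f A" by (rule finite_sum_le_infsum[OF summ F]) (rule hit_before_nonneg)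
      finally show "(\<Sum>n\<in>F. hitp K t m {n} b) \<le> infsum ?f A" .
    qed
  qed
  show ?thesis using summ up low by blast
qed

end

lemma Omega_finite: "m \<in> Omega k N \<Longrightarrow> finite {l. m l \<noteq> 0}"
  by (simp add: Omega_def)

lemma config_exists:
  assumes "m \<in> Omega k N"
  shows "\<exists>x. \<forall>l. card {j \<in> {..<N}. x j = l} = m l"
proof -
  define S where "S = {l. m l \<noteq> 0}"
  have fS: "finite S" using assms by (simp add: Omega_def S_def)
  have sumN: "(\<Sum>l\<in>S. m l) = N" using assms by (simp add: Omega_def S_def)
  define ls where "ls = sorted_list_of_set S"
  define L where "L = concat (map (\<lambda>l. replicate (m l) l) ls)"
  have dls: "distinct ls" and sls: "set ls = S" using fS by (auto simp: ls_def)
  have lenL: "length L = N"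
    unfolding L_def length_concat map_map o_def length_replicate
    using dls sls sumN by (simp add: sum_list_distinct_conv_sum_set)
  have cnt: "length (filter ((=) l) L) = m l" for l
  proof -
    have "length (filter ((=) l) L) = sum_list (map (\<lambda>l'. length (filter ((=) l) (replicate (m l') l'))) ls)"
      unfolding L_def filter_concat length_concat map_map o_def by simp
    also have "\<dots> = (\<Sum>l'\<in>S. length (filter ((=) l) (replicate (m l') l')))"
      using dls sls by (simp add: sum_list_distinct_conv_sum_set)
    also have "\<dots> = (\<Sum>l'\<in>S. if l' = l then m l else 0)"
      by (intro sum.cong refl) (auto simp: filter_replicate)
    also have "\<dots> = m l" using fS by (auto simp: S_def)
    finally show ?thesis .
  qed
  show ?thesis
  proof (intro exI allI)
    fix l
    have "card {j \<in> {..<N}. L ! j = l} = length (filter ((=) l) L)"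
      by (simp add: length_filter_conv_card lenL eq_commute)
    then show "card {j \<in> {..<N}. L ! j = l} = m l" using cnt by simp
  qed
qed

lemma config_card:
  assumes "m \<in> Omega k N"
  shows "card {j \<in> {..<N}. config N m j = l} = m l"
  using someI_ex[OF config_exists[OF assms]] unfolding config_def by blast

lemma phi_props:
  assumes m: "m \<in> Omega k N" and N: "1 \<le> N"
  shows "0 < m (phi m)" "\<And>l. 0 < m l \<Longrightarrow> l \<le> phi m" "phi m \<le> k"
proof -
  have "{l. 0 < m l} = {l. m l \<noteq> 0}" by auto
  then have fin: "finite {l. 0 < m l}" using Omega_finite[OF m] by simp
  have ne: "{l. 0 < m l} \<noteq> {}"
  proof
    assume "{l. 0 < m l} = {}"
    then have "{l. m l \<noteq> 0} = {}" by auto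
    then show False using m N by (simp add: Omega_def)
  qed
  have mx: "phi m \<in> {l. 0 < m l}" unfolding phi_def by (rule Max_in[OF fin ne])
  then show "0 < m (phi m)" by simp
  show "l \<le> phi m" if "0 < m l" for l
    unfolding phi_def by (rule Max_ge[OF fin]) (use that in simp)
  have z: "\<forall>l. k < l \<longrightarrow> m l = 0" using m by (simp add: Omega_def)
  show "phi m \<le> k"
  proof (rule ccontr)
    assume "\<not> phi m \<le> k"
    then have "k < phi m" by simp
    then have "m (phi m) = 0" using z by blast
    then show False using mx by simp
  qed
qed

lemma config_le_phi:
  assumes m: "m \<in> Omega k N" and N: "1 \<le> N" and j: "j < N"
  shows "config N m j \<le> phi m"
proof -
  let ?S = "{j' \<in> {..<N}. config N m j' = config N m j}"
  have "j \<in> ?S" using j by simp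
  moreover have "finite ?S" by simp
  ultimately have "0 < card ?S" using card_gt_0_iff by blast
  then have "0 < m (config N m j)" using config_card[OF m] by simp
  then show ?thesis by (rule phi_props(2)[OF m N])
qed

definition Phi :: "nat \<Rightarrow> (int \<Rightarrow> nat) \<Rightarrow> (nat \<times> nat \<Rightarrow> int) \<Rightarrow> (int \<Rightarrow> nat)" where
  "Phi N m X = (\<lambda>l. card {i \<in> {..<N}. (MAX j\<in>{..<N}. config N m j + X (i, j)) = phi m + l})"

definition Xpmf :: "int pmf \<Rightarrow> nat \<Rightarrow> (nat \<times> nat \<Rightarrow> int) pmf" where
  "Xpmf xi N = Pi_pmf ({..<N} \<times> {..<N}) 0 (\<lambda>_. xi)"

lemma step_Phi: "step xi N m = map_pmf (Phi N m) (Xpmf xi N)"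
  unfolding step_def Phi_def Xpmf_def ..

definition Tset :: "nat \<Rightarrow> (int \<Rightarrow> nat) \<Rightarrow> nat set" where
  "Tset N m = {j \<in> {..<N}. config N m j = phi m}"

definition Rrow :: "int \<Rightarrow> nat \<Rightarrow> (int \<Rightarrow> nat) \<Rightarrow> (nat \<times> nat \<Rightarrow> int) \<Rightarrow> nat \<Rightarrow> bool" where
  "Rrow k N m X i = (\<exists>j\<in>Tset N m. X (i, j) = k)"

lemma card_Tset: "m \<in> Omega k N \<Longrightarrow> card (Tset N m) = m (phi m)"
  unfolding Tset_def by (rule config_card)

lemma Xpmf_support:
  assumes "X \<in> set_pmf (Xpmf xi N)" "set_pmf xi \<subseteq> {..k}" "i < N" "j < N"
  shows "X (i, j) \<le> k"
proof -
  have "X \<in> PiE_dflt ({..<N} \<times> {..<N}) 0 (set_pmf \<circ> (\<lambda>_. xi))"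
    using assms(1) by (simp add: Xpmf_def set_Pi_pmf)
  then have "X (i, j) \<in> set_pmf xi" using assms(3,4) by (auto simp: PiE_dflt_def)
  then show ?thesis using assms(2) by auto
qed

lemma rowmax:
  assumes m: "m \<in> Omega k N" and N: "1 \<le> N" and X: "X \<in> set_pmf (Xpmf xi N)"
    and xi: "set_pmf xi \<subseteq> {..k}" and i: "i < N"
  shows "(MAX j\<in>{..<N}. config N m j + X (i, j)) \<le> phi m + k"
    "(MAX j\<in>{..<N}. config N m j + X (i, j)) = phi m + k \<longleftrightarrow> Rrow k N m X i"
proof -
  let ?f = "\<lambda>j. config N m j + X (i, j)"
  let ?M = "MAX j\<in>{..<N}. ?f j"
  have "0 \<in> {..<N}" using N by simp
  then have ne: "{..<N} \<noteq> {}" by blast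
  have le: "?f j \<le> phi m + k" if "j < N" for j
  proof -
    have "config N m j \<le> phi m" by (rule config_le_phi[OF m N that])
    moreover have "X (i, j) \<le> k" by (rule Xpmf_support[OF X xi i that])
    ultimately show ?thesis by linarith
  qed
  have "?M \<in> ?f ` {..<N}"
    by (rule Max_in) (simp_all add: ne)
  then obtain j0 where j0: "j0 < N" "?M = ?f j0"
    by blast
  have lj0: "?f j0 \<le> phi m + k" by (rule le[OF j0(1)])
  show "?M \<le> phi m + k" using j0(2) lj0 by linarith
  show "?M = phi m + k \<longleftrightarrow> Rrow k N m X i"
  proof
    assume "?M = phi m + k"
    then have "?f j0 = phi m + k" using j0(2) by linarith
    moreover have "config N m j0 \<le> phi m" by (rule config_le_phi[OF m N j0(1)])
    moreover have "X (i, j0) \<le> k" by (rule Xpmf_support[OF X xi i j0(1)])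
    ultimately have "config N m j0 = phi m" "X (i, j0) = k" by linarith+
    then show "Rrow k N m X i" using j0(1) unfolding Rrow_def Tset_def by blast
  next
    assume "Rrow k N m X i"
    then obtain j where j: "j < N" "config N m j = phi m" "X (i, j) = k"
      unfolding Rrow_def Tset_def by blast
    have "?f j \<le> ?M" by (rule Max_ge) (use j(1) in simp_all)
    moreover have "?f j = phi m + k" using j by simp
    ultimately show "?M = phi m + k" using j0(2) lj0 by linarith
  qed
qed

lemma Phi_props:
  assumes m: "m \<in> Omega k N" and N: "1 \<le> N" and X: "X \<in> set_pmf (Xpmf xi N)"
    and xi: "set_pmf xi \<subseteq> {..k}"
  shows "Phi N m X \<in> Omega k N"
    "Phi N m X k = card {i \<in> {..<N}. Rrow k N m X i}"
    "Phi N m X = oplus k N \<longleftrightarrow> (\<forall>i<N. Rrow k N m X i)"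
    "Phi N m X \<in> Omega0 k N \<longleftrightarrow> (\<forall>i<N. \<not> Rrow k N m X i)"
proof -
  define r where "r i = (MAX j\<in>{..<N}. config N m j + X (i, j))" for i
  define ph where "ph = phi m"
  have PhiE: "Phi N m X l = card {i \<in> {..<N}. r i = ph + l}" for l
    by (simp add: Phi_def r_def ph_def)
  have rle: "r i \<le> ph + k" if "i < N" for i
    unfolding r_def ph_def by (rule rowmax(1)[OF m N X xi that])
  have req: "r i = ph + k \<longleftrightarrow> Rrow k N m X i" if "i < N" for i
    unfolding r_def ph_def by (rule rowmax(2)[OF m N X xi that])
  have above: "Phi N m X l = 0" if "k < l" for l
  proof -
    have "{i \<in> {..<N}. r i = ph + l} = {}" using rle that by force
    then show ?thesis by (simp add: PhiE)
  qed
  have Seq: "{l. Phi N m X l \<noteq> 0} = (\<lambda>i. r i - ph) ` {..<N}"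
  proof (rule set_eqI)
    fix l
    have "Phi N m X l \<noteq> 0 \<longleftrightarrow> {i \<in> {..<N}. r i = ph + l} \<noteq> {}"
      by (simp add: PhiE)
    also have "\<dots> \<longleftrightarrow> l \<in> (\<lambda>i. r i - ph) ` {..<N}" by force
    finally show "l \<in> {l. Phi N m X l \<noteq> 0} \<longleftrightarrow> l \<in> (\<lambda>i. r i - ph) ` {..<N}" by simp
  qed
  have sumN: "(\<Sum>l\<in>{l. Phi N m X l \<noteq> 0}. Phi N m X l) = N"
  proof -
    let ?S = "(\<lambda>i. r i - ph) ` {..<N}"
    have "(\<Sum>l\<in>?S. Phi N m X l) = (\<Sum>l\<in>?S. card {i \<in> {..<N}. r i = ph + l})"
      by (simp add: PhiE)
    also have "\<dots> = card (\<Union>l\<in>?S. {i \<in> {..<N}. r i = ph + l})"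
      by (rule card_UN_disjoint[symmetric]) auto
    also have "(\<Union>l\<in>?S. {i \<in> {..<N}. r i = ph + l}) = {..<N}" by force
    finally show ?thesis using Seq by simp
  qed
  show "Phi N m X \<in> Omega k N"
    unfolding Omega_def using above Seq sumN by auto
  show k: "Phi N m X k = card {i \<in> {..<N}. Rrow k N m X i}"
    unfolding PhiE using req by (intro arg_cong[where f=card]) auto
  show "Phi N m X = oplus k N \<longleftrightarrow> (\<forall>i<N. Rrow k N m X i)"
  proof
    assume "Phi N m X = oplus k N"
    then have "card {i \<in> {..<N}. Rrow k N m X i} = card {..<N}"
      using k by (simp add: oplus_def)
    then have "{i \<in> {..<N}. Rrow k N m X i} = {..<N}"
      by (intro card_subset_eq) auto
    then show "\<forall>i<N. Rrow k N m X i" by auto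
  next
    assume all: "\<forall>i<N. Rrow k N m X i"
    show "Phi N m X = oplus k N"
    proof
      fix l
      have "{i \<in> {..<N}. r i = ph + l} = (if l = k then {..<N} else {})"
        using all req by auto
      then show "Phi N m X l = oplus k N l" by (simp add: PhiE oplus_def)
    qed
  qed
  show "Phi N m X \<in> Omega0 k N \<longleftrightarrow> (\<forall>i<N. \<not> Rrow k N m X i)"
  proof -
    have "Phi N m X \<in> Omega0 k N \<longleftrightarrow> card {i \<in> {..<N}. Rrow k N m X i} = 0"
      using \<open>Phi N m X \<in> Omega k N\<close> k by (simp add: Omega0_def)
    also have "\<dots> \<longleftrightarrow> (\<forall>i<N. \<not> Rrow k N m X i)" by auto
    finally show ?thesis .
  qed
qed

lemma pow_phi_le:
  assumes m: "m \<in> Omega k N" and N: "1 \<le> N" and q: "0 \<le> q" "q \<le> (1::real)"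
  shows "q ^ m (phi m) \<le> q ^ m k"
proof (cases "m k = 0")
  case True then show ?thesis using q by (simp add: power_le_one)
next
  case False
  then have "k \<le> phi m" using phi_props(2)[OF m N] by simp
  then have "phi m = k" using phi_props(3)[OF m N] by simp
  then show ?thesis by simp
qed

lemma rowprod_nn:
  fixes G :: "'i \<Rightarrow> ('j \<Rightarrow> 'a) \<Rightarrow> ennreal"
  assumes I: "finite I" and J: "finite J"
    and dep: "\<And>i w w'. (\<forall>j\<in>J. w j = w' j) \<Longrightarrow> G i w = G i w'"
  shows "(\<integral>\<^sup>+X. (\<Prod>i\<in>I. G i (\<lambda>j. X (i, j))) \<partial>Pi_pmf (I \<times> J) d (\<lambda>_. q)) =
         (\<Prod>i\<in>I. \<integral>\<^sup>+X. G i (\<lambda>j. X (i, j)) \<partial>Pi_pmf ({i} \<times> J) d (\<lambda>_. q))"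
  using I
proof (induction rule: finite_induct)
  case empty
  then show ?case by simp
next
  case (insert i I)
  let ?P1 = "Pi_pmf ({i} \<times> J) d (\<lambda>_. q)"
  let ?PI = "Pi_pmf (I \<times> J) d (\<lambda>_. q)"
  have eqset: "insert i I \<times> J = {i} \<times> J \<union> I \<times> J" by auto
  have un: "Pi_pmf (insert i I \<times> J) d (\<lambda>_. q) =
     map_pmf (\<lambda>(f,g) x. if x \<in> {i} \<times> J then f x else g x) (pair_pmf ?P1 ?PI)"
    unfolding eqset by (rule Pi_pmf_union) (use J insert.hyps in auto)
  have row1: "G i (\<lambda>j. (if (i, j) \<in> {i} \<times> J then f (i, j) else g (i, j))) = G i (\<lambda>j. f (i, j))" for f g
    by (rule dep) auto
  have row2: "G i' (\<lambda>j. (if (i', j) \<in> {i} \<times> J then f (i', j) else g (i', j))) = G i' (\<lambda>j. g (i', j))"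
    if "i' \<in> I" for f g i'
    by (rule dep) (use that insert.hyps in auto)
  have pw: "(\<Prod>i'\<in>insert i I. G i' (\<lambda>j. (if (i', j) \<in> {i} \<times> J then f (i', j) else g (i', j))))
      = G i (\<lambda>j. f (i, j)) * (\<Prod>i'\<in>I. G i' (\<lambda>j. g (i', j)))" for f g
    apply (subst prod.insert[OF insert.hyps])
    apply (subst row1)
    apply (rule arg_cong[where f="\<lambda>x. _ * x"])
    apply (rule prod.cong[OF refl row2])
    apply assumption
    done
  have "(\<integral>\<^sup>+X. (\<Prod>i'\<in>insert i I. G i' (\<lambda>j. X (i', j))) \<partial>Pi_pmf (insert i I \<times> J) d (\<lambda>_. q))
     = (\<integral>\<^sup>+f. \<integral>\<^sup>+g. (\<Prod>i'\<in>insert i I. G i' (\<lambda>j. (if (i', j) \<in> {i} \<times> J then f (i', j) else g (i', j)))) \<partial>?PI \<partial>?P1)"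
    by (simp only: un nn_integral_map_pmf nn_integral_pair_pmf' case_prod_conv)
  also have "\<dots> = (\<integral>\<^sup>+f. \<integral>\<^sup>+g. G i (\<lambda>j. f (i, j)) * (\<Prod>i'\<in>I. G i' (\<lambda>j. g (i', j))) \<partial>?PI \<partial>?P1)"
    by (simp only: pw)
  also have "\<dots> = (\<integral>\<^sup>+f. G i (\<lambda>j. f (i, j)) * (\<integral>\<^sup>+g. (\<Prod>i'\<in>I. G i' (\<lambda>j. g (i', j))) \<partial>?PI) \<partial>?P1)"
    by (simp add: nn_integral_cmult)
  also have "\<dots> = (\<integral>\<^sup>+f. G i (\<lambda>j. f (i, j)) \<partial>?P1) * (\<integral>\<^sup>+g. (\<Prod>i'\<in>I. G i' (\<lambda>j. g (i', j))) \<partial>?PI)"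
    by (simp add: nn_integral_multc)
  also have "\<dots> = (\<Prod>i'\<in>insert i I. \<integral>\<^sup>+X. G i' (\<lambda>j. X (i', j)) \<partial>Pi_pmf ({i'} \<times> J) d (\<lambda>_. q))"
    using insert by simp
  finally show ?case .
qed

lemma rowprod:
  fixes F :: "'i \<Rightarrow> ('j \<Rightarrow> 'a) \<Rightarrow> real"
  assumes I: "finite I" and J: "finite J"
    and dep: "\<And>i w w'. (\<forall>j\<in>J. w j = w' j) \<Longrightarrow> F i w = F i w'"
    and F0: "\<And>i w. 0 \<le> F i w" and F1: "\<And>i w. F i w \<le> 1"
  shows "measure_pmf.expectation (Pi_pmf (I \<times> J) d (\<lambda>_. q)) (\<lambda>X. \<Prod>i\<in>I. F i (\<lambda>j. X (i, j))) =
         (\<Prod>i\<in>I. measure_pmf.expectation (Pi_pmf ({i} \<times> J) d (\<lambda>_. q)) (\<lambda>X. F i (\<lambda>j. X (i, j))))"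
proof -
  have int: "integrable (measure_pmf M) f" if "\<And>x. 0 \<le> f x \<and> f x \<le> 1" for M and f :: "_ \<Rightarrow> real"
    by (rule int_bounded[where B=1]) (use that in \<open>auto simp: abs_le_iff\<close>)
  have e1: "ennreal (measure_pmf.expectation M (\<lambda>X. f X)) = (\<integral>\<^sup>+X. ennreal (f X) \<partial>M)"
    if "\<And>x. 0 \<le> f x \<and> f x \<le> 1" for M and f :: "_ \<Rightarrow> real"
    by (rule nn_integral_eq_integral[symmetric]) (use that int in auto)
  have p01: "0 \<le> (\<Prod>i\<in>I. F i (w i)) \<and> (\<Prod>i\<in>I. F i (w i)) \<le> 1" for w
    using F0 F1 by (auto intro: prod_nonneg prod_le_1)
  have "ennreal (measure_pmf.expectation (Pi_pmf (I \<times> J) d (\<lambda>_. q)) (\<lambda>X. \<Prod>i\<in>I. F i (\<lambda>j. X (i, j))))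
     = (\<integral>\<^sup>+X. ennreal (\<Prod>i\<in>I. F i (\<lambda>j. X (i, j))) \<partial>Pi_pmf (I \<times> J) d (\<lambda>_. q))"
    by (rule e1) (rule p01)
  also have "\<dots> = (\<integral>\<^sup>+X. (\<Prod>i\<in>I. ennreal (F i (\<lambda>j. X (i, j)))) \<partial>Pi_pmf (I \<times> J) d (\<lambda>_. q))"
    using F0 by (simp add: prod_ennreal)
  also have "\<dots> = (\<Prod>i\<in>I. \<integral>\<^sup>+X. ennreal (F i (\<lambda>j. X (i, j))) \<partial>Pi_pmf ({i} \<times> J) d (\<lambda>_. q))"
    by (rule rowprod_nn[OF I J]) (metis dep)
  also have "\<dots> = (\<Prod>i\<in>I. ennreal (measure_pmf.expectation (Pi_pmf ({i} \<times> J) d (\<lambda>_. q)) (\<lambda>X. F i (\<lambda>j. X (i, j)))))"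
    by (intro prod.cong refl e1[symmetric]) (use F0 F1 in auto)
  also have "\<dots> = ennreal (\<Prod>i\<in>I. measure_pmf.expectation (Pi_pmf ({i} \<times> J) d (\<lambda>_. q)) (\<lambda>X. F i (\<lambda>j. X (i, j))))"
    by (rule prod_ennreal) (use F0 in \<open>auto intro: Bochner_Integration.integral_nonneg\<close>)
  finally show ?thesis
    by (subst (asm) ennreal_inj) (use F0 p01 in \<open>auto intro!: prod_nonneg Bochner_Integration.integral_nonneg\<close>)
qed

lemma row_prob:
  fixes i :: 'i and J T :: "'j set" and k :: 'a
  assumes J: "finite J" and T: "T \<subseteq> J"
  shows "measure_pmf.prob (Pi_pmf ({i} \<times> J) d (\<lambda>_. xi)) {X. \<forall>j\<in>T. X (i, j) \<noteq> k}
     = (1 - pmf xi k) ^ card T"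
proof -
  define Bf where "Bf = (\<lambda>x::'i \<times> 'j. if snd x \<in> T then - {k} else UNIV)"
  have "{X. \<forall>j\<in>T. X (i, j) \<noteq> k} = Pi ({i} \<times> J) Bf"
    using T by (auto simp: Bf_def Pi_def)
  then have "measure_pmf.prob (Pi_pmf ({i} \<times> J) d (\<lambda>_. xi)) {X. \<forall>j\<in>T. X (i, j) \<noteq> k}
      = (\<Prod>x\<in>{i} \<times> J. measure_pmf.prob xi (Bf x))"
    using J by (simp add: measure_Pi_pmf_Pi)
  also have "\<dots> = (\<Prod>x\<in>{i} \<times> J. if snd x \<in> T then 1 - pmf xi k else 1)"
  proof -
    have c: "measure_pmf.prob xi (- {k}) = 1 - pmf xi k"
      using measure_pmf.prob_compl[of "{k}" xi] by (simp add: measure_pmf_single Compl_eq_Diff_UNIV)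
    show ?thesis by (intro prod.cong refl) (auto simp: Bf_def c)
  qed
  also have "\<dots> = (\<Prod>j\<in>J. if j \<in> T then 1 - pmf xi k else 1)"
  proof -
    have "{i} \<times> J = Pair i ` J" by auto
    then show ?thesis by (simp add: prod.reindex inj_on_def)
  qed
  also have "\<dots> = (1 - pmf xi k) ^ card T"
    using J T by (simp add: prod.If_cases Int_absorb1 Int_commute)
  finally show ?thesis .
qed

lemma row_expect:
  assumes J: "finite J" and T: "T \<subseteq> J"
  shows "measure_pmf.expectation (Pi_pmf ({i} \<times> J) d (\<lambda>_. xi)) (\<lambda>X. h (\<exists>j\<in>T. X (i, j) = k))
     = h True * (1 - (1 - pmf xi k) ^ card T) + h False * (1 - pmf xi k) ^ card T"
proof -
  let ?M = "Pi_pmf ({i} \<times> J) d (\<lambda>_. xi)"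
  let ?B = "{X. \<forall>j\<in>T. X (i, j) \<noteq> k}"
  have "(\<lambda>X. h (\<exists>j\<in>T. X (i, j) = k)) = (\<lambda>X. h True + (h False - h True) * indicator ?B X)"
    by (auto simp: indicator_def fun_eq_iff)
  moreover have "measure_pmf.expectation ?M (\<lambda>X. h True + (h False - h True) * indicator ?B X)
      = measure_pmf.expectation ?M (\<lambda>X. h True) + measure_pmf.expectation ?M (\<lambda>X. (h False - h True) * indicator ?B X)"
  proof (rule Bochner_Integration.integral_add)
    show "integrable (measure_pmf ?M) (\<lambda>X. h True)" by (rule int_bounded[where B="\<bar>h True\<bar>"]) simp
    show "integrable (measure_pmf ?M) (\<lambda>X. (h False - h True) * indicator ?B X)"
      by (rule int_bounded[where B="\<bar>h False - h True\<bar>"]) (simp add: indicator_def abs_mult)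
  qed
  ultimately have "measure_pmf.expectation ?M (\<lambda>X. h (\<exists>j\<in>T. X (i, j) = k))
      = h True + (h False - h True) * measure_pmf.prob ?M ?B"
    by simp
  also have "\<dots> = h True * (1 - (1 - pmf xi k) ^ card T) + h False * (1 - pmf xi k) ^ card T"
    unfolding row_prob[OF J T] by (simp add: algebra_simps)
  finally show ?thesis .
qed

lemma Tset_sub: "Tset N m \<subseteq> {..<N}" by (auto simp: Tset_def)

lemma Eprod:
  assumes m: "m \<in> Omega k N" and h0: "\<And>b. 0 \<le> h b" and h1: "\<And>b. h b \<le> 1"
  shows "measure_pmf.expectation (Xpmf xi N) (\<lambda>X. \<Prod>i\<in>{..<N}. h (Rrow k N m X i))
       = (h True * (1 - (1 - pmf xi k) ^ m (phi m)) + h False * (1 - pmf xi k) ^ m (phi m)) ^ N"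
proof -
  let ?F = "\<lambda>(i::nat) (w::nat \<Rightarrow> int). h (\<exists>j\<in>Tset N m. w j = k)"
  have "measure_pmf.expectation (Xpmf xi N) (\<lambda>X. \<Prod>i\<in>{..<N}. h (Rrow k N m X i))
      = measure_pmf.expectation (Pi_pmf ({..<N} \<times> {..<N}) 0 (\<lambda>_. xi)) (\<lambda>X. \<Prod>i\<in>{..<N}. ?F i (\<lambda>j. X (i, j)))"
    by (simp add: Xpmf_def Rrow_def)
  also have "\<dots> = (\<Prod>i\<in>{..<N}. measure_pmf.expectation (Pi_pmf ({i} \<times> {..<N}) 0 (\<lambda>_. xi)) (\<lambda>X. ?F i (\<lambda>j. X (i, j))))"
  proof (rule rowprod)
    fix i and w w' :: "nat \<Rightarrow> int"
    assume "\<forall>j\<in>{..<N}. w j = w' j"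
    then have "(\<exists>j\<in>Tset N m. w j = k) = (\<exists>j\<in>Tset N m. w' j = k)" using Tset_sub[of N m] by (auto simp: subset_iff)
    then show "?F i w = ?F i w'" by simp
  qed (simp_all add: h0 h1)
  also have "\<dots> = (\<Prod>i\<in>{..<N}. h True * (1 - (1 - pmf xi k) ^ card (Tset N m)) + h False * (1 - pmf xi k) ^ card (Tset N m))"
    by (intro prod.cong refl row_expect Tset_sub) simp
  also have "\<dots> = (h True * (1 - (1 - pmf xi k) ^ m (phi m)) + h False * (1 - pmf xi k) ^ m (phi m)) ^ N"
    by (simp add: card_Tset[OF m])
  finally show ?thesis .
qed

lemma prod_01: "finite I \<Longrightarrow> (\<Prod>i\<in>I. if P i then 1 else 0::real) = (if \<forall>i\<in>I. P i then 1 else 0)"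
  by (induction I rule: finite_induct) auto

lemma prod_q: "finite I \<Longrightarrow> (\<Prod>i\<in>I. if P i then q else 1::real) = q ^ card {i\<in>I. P i}"
proof (induction I rule: finite_induct)
  case (insert x F)
  have "{i \<in> insert x F. P i} = (if P x then insert x {i \<in> F. P i} else {i \<in> F. P i})" by auto
  then show ?case using insert by auto
qed simp

lemma arith_key:
  fixes p x :: real and N :: nat
  assumes p: "0 < p" "p < 1" and x: "0 \<le> x" "x \<le> 1 - p" and N: "1 \<le> N"
    and big: "(2 * real N + 1) * (1 - p^2) ^ N \<le> 1"
  defines "\<beta> \<equiv> 2 * (1 - p) ^ (N - 1)"
  shows "x ^ N + \<beta> * ((1 - p) * (1 - x) + x) ^ N + \<beta> * (1 - (1 - x) ^ N) \<le> \<beta> * (x + 1)"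
proof -
  define \<eta> where "\<eta> = (1 - p^2) ^ N"
  have b0: "0 \<le> \<beta>" using p by (simp add: \<beta>_def)
  have i: "x ^ N \<le> \<beta> * x / 2"
  proof -
    have "x ^ N = x * x ^ (N - 1)" using N by (metis Suc_diff_le diff_Suc_1 power_Suc)
    also have "\<dots> \<le> x * (1 - p) ^ (N - 1)" using x by (intro mult_left_mono power_mono) auto
    finally show ?thesis by (simp add: \<beta>_def mult.commute)
  qed
  have ii: "((1 - p) * (1 - x) + x) ^ N \<le> \<eta>"
  proof -
    have "(1 - p) * (1 - x) + x = 1 - p * (1 - x)" by (simp add: algebra_simps)
    moreover have "p * p \<le> p * (1 - x)" using p x by (intro mult_left_mono) auto
    moreover have "p * (1 - x) \<le> 1" using p x by (simp add: mult_le_one)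
    ultimately show ?thesis unfolding \<eta>_def
      by (intro power_mono) (auto simp: power2_eq_square)
  qed
  have iii: "\<eta> \<le> x / 2 + (1 - x) ^ N"
  proof (cases "2 * \<eta> \<le> x")
    case True
    have "0 \<le> (1 - x) ^ N" using x p by simp
    then show ?thesis using True by linarith
  next
    case False
    have "1 + real N * (- x) \<le> (1 + - x) ^ N" by (rule Bernoulli_inequality) (use x p in auto)
    then have "1 - real N * x \<le> (1 - x) ^ N" by simp
    moreover have "real N * x \<le> real N * (2 * \<eta>)" using False by (intro mult_left_mono) auto
    moreover have "(2 * real N + 1) * \<eta> \<le> 1" using big by (simp add: \<eta>_def)
    ultimately show ?thesis using x by (simp add: algebra_simps)
  qed
  have "x ^ N + \<beta> * ((1 - p) * (1 - x) + x) ^ N + \<beta> * (1 - (1 - x) ^ N)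
      \<le> \<beta> * x / 2 + \<beta> * (x / 2 + (1 - x) ^ N) + \<beta> * (1 - (1 - x) ^ N)"
    using i mult_left_mono[OF order.trans[OF ii iii] b0] by linarith
  also have "\<dots> = \<beta> * (x + 1)" by (simp add: algebra_simps)
  finally show ?thesis .
qed

definition gfun :: "real \<Rightarrow> nat \<Rightarrow> (int \<Rightarrow> nat) \<Rightarrow> real" where
  "gfun q N m = 2 * q ^ (N - 1) * (q ^ m (phi m) + 1)"

lemma gfun_bounds: "0 \<le> q \<Longrightarrow> q \<le> 1 \<Longrightarrow> 0 \<le> gfun q N m \<and> gfun q N m \<le> 4 * q ^ (N - 1)"
proof -
  assume q: "0 \<le> q" "q \<le> 1"
  have a: "0 \<le> q ^ m (phi m)" "q ^ m (phi m) \<le> 1" using q by (auto simp: power_le_one)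
  have b: "0 \<le> q ^ (N - 1)" using q by simp
  have "q ^ (N - 1) * (q ^ m (phi m) + 1) \<le> q ^ (N - 1) * 2"
    using a b by (intro mult_left_mono) auto
  then show ?thesis using a b unfolding gfun_def by auto
qed

lemma lyap:
  fixes xi :: "int pmf"
  assumes xi: "set_pmf xi \<subseteq> {..k}" and p: "0 < pmf xi k" "pmf xi k < 1" and N: "1 \<le> N"
    and big: "(2 * real N + 1) * (1 - (pmf xi k)^2) ^ N \<le> 1" and m: "m \<in> Omega k N"
  shows "measure_pmf.expectation (step xi N m)
     (\<lambda>m'. if m' = oplus k N then 0 else indicator (Omega0 k N) m' + gfun (1 - pmf xi k) N m')
     \<le> gfun (1 - pmf xi k) N m"
proof -
  define q where "q = 1 - pmf xi k"
  define \<beta> where "\<beta> = 2 * q ^ (N - 1)"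
  define x where "x = q ^ m (phi m)"
  have q01: "0 \<le> q" "q \<le> 1" using p by (auto simp: q_def)
  have b0: "0 \<le> \<beta>" using q01 by (simp add: \<beta>_def)
  let ?f = "\<lambda>m'. if m' = oplus k N then 0 else indicator (Omega0 k N) m' + gfun q N m'"
  define h0 where "h0 = (\<lambda>b::bool. if b then 0 else 1::real)"
  define h1 where "h1 = (\<lambda>b::bool. if b then q else 1::real)"
  define h2 where "h2 = (\<lambda>b::bool. if b then 1 else 0::real)"
  let ?P = "\<lambda>h X. \<Prod>i\<in>{..<N}. h (Rrow k N m X i)"
  let ?U = "\<lambda>X. ?P h0 X + \<beta> * ?P h1 X + \<beta> * (1 - ?P h2 X)"
  have P01: "0 \<le> ?P h X \<and> ?P h X \<le> 1" if "\<And>b. 0 \<le> h b \<and> h b \<le> 1" for h :: "bool \<Rightarrow> real" and X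
  proof
    show "0 \<le> ?P h X" by (rule prod_nonneg) (use that in blast)
    show "?P h X \<le> 1" by (rule prod_le_1) (use that in blast)
  qed
  have hb: "\<And>b. 0 \<le> h0 b \<and> h0 b \<le> 1" "\<And>b. 0 \<le> h1 b \<and> h1 b \<le> 1" "\<And>b. 0 \<le> h2 b \<and> h2 b \<le> 1"
    using q01 by (auto simp: h0_def h1_def h2_def)
  have intP: "integrable (measure_pmf (Xpmf xi N)) (?P h)" if "\<And>b. 0 \<le> h b \<and> h b \<le> 1" for h :: "bool \<Rightarrow> real"
  proof (rule int_bounded[where B=1])
    fix X
    have "0 \<le> ?P h X \<and> ?P h X \<le> 1" by (rule P01) (rule that)
    then show "\<bar>?P h X\<bar> \<le> 1" by (simp add: abs_le_iff)
  qed
  have pw: "?f (Phi N m X) \<le> ?U X" if X: "X \<in> set_pmf (Xpmf xi N)" for X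
  proof -
    let ?R = "\<lambda>i. Rrow k N m X i"
    have e0: "?P h0 X = (if \<forall>i\<in>{..<N}. \<not> ?R i then 1 else 0)"
    proof -
      have "?P h0 X = (\<Prod>i\<in>{..<N}. if \<not> ?R i then 1 else 0)"
        unfolding h0_def by (intro prod.cong refl) simp
      then show ?thesis by (simp only: prod_01[OF finite_lessThan])
    qed
    have e1: "?P h1 X = q ^ card {i\<in>{..<N}. ?R i}" unfolding h1_def by (rule prod_q) simp
    have e2: "?P h2 X = (if \<forall>i\<in>{..<N}. ?R i then 1 else 0)" unfolding h2_def by (rule prod_01) simp
    have props: "Phi N m X \<in> Omega k N"
        "Phi N m X k = card {i \<in> {..<N}. ?R i}"
        "Phi N m X = oplus k N \<longleftrightarrow> (\<forall>i<N. ?R i)"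
        "Phi N m X \<in> Omega0 k N \<longleftrightarrow> (\<forall>i<N. \<not> ?R i)"
      using Phi_props[OF m N X xi] by blast+
    have nn: "0 \<le> ?P h0 X" "0 \<le> ?P h1 X" using P01 hb by blast+
    show ?thesis
    proof (cases "\<forall>i<N. ?R i")
      case True
      then have "?P h2 X = 1" using e2 by simp
      then show ?thesis using True props(3) nn b0 by simp
    next
      case False
      then have f2: "?P h2 X = 0" using e2 by auto
      have ind: "indicator (Omega0 k N) (Phi N m X) = ?P h0 X"
        using e0 props(4) by (auto simp: indicator_def)
      have "q ^ Phi N m X (phi (Phi N m X)) \<le> q ^ Phi N m X k"
        by (rule pow_phi_le[OF props(1) N q01])
      then have g: "gfun q N (Phi N m X) \<le> \<beta> * (?P h1 X + 1)"
        unfolding gfun_def e1 props(2)[symmetric] \<beta>_def using q01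
        by (intro mult_left_mono) auto
      have ne: "Phi N m X \<noteq> oplus k N" using False props(3) by blast
      have "?f (Phi N m X) = indicator (Omega0 k N) (Phi N m X) + gfun q N (Phi N m X)"
        using ne by (simp only: if_False)
      also have "\<dots> \<le> ?P h0 X + \<beta> * (?P h1 X + 1)" using ind g by linarith
      also have "\<dots> = ?U X" by (simp only: f2) (simp add: algebra_simps)
      finally show ?thesis .
    qed
  qed
  have "measure_pmf.expectation (step xi N m) ?f = measure_pmf.expectation (Xpmf xi N) (\<lambda>X. ?f (Phi N m X))"
    by (simp add: step_Phi)
  also have "\<dots> \<le> measure_pmf.expectation (Xpmf xi N) ?U"
  proof (rule integral_mono_AE)
    show "integrable (measure_pmf (Xpmf xi N)) (\<lambda>X. ?f (Phi N m X))"
    proof (rule int_bounded[where B="1 + 4 * q ^ (N - 1)"])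
      fix X
      show "\<bar>?f (Phi N m X)\<bar> \<le> 1 + 4 * q ^ (N - 1)"
        using gfun_bounds[OF q01, of N "Phi N m X"] by (auto simp: indicator_def)
    qed
    show "integrable (measure_pmf (Xpmf xi N)) ?U"
      using intP hb by (intro Bochner_Integration.integrable_add Bochner_Integration.integrable_diff
          integrable_mult_right) auto
    show "AE X in measure_pmf (Xpmf xi N). ?f (Phi N m X) \<le> ?U X"
      by (rule AE_pmfI) (rule pw)
  qed
  also have "\<dots> = measure_pmf.expectation (Xpmf xi N) (?P h0) + \<beta> * measure_pmf.expectation (Xpmf xi N) (?P h1)
        + \<beta> * (1 - measure_pmf.expectation (Xpmf xi N) (?P h2))"
    using intP hb by (simp add: Bochner_Integration.integral_add Bochner_Integration.integral_diff)
  also have "\<dots> = x ^ N + \<beta> * ((1 - pmf xi k) * (1 - x) + x) ^ N + \<beta> * (1 - (1 - x) ^ N)"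
  proof -
    have E: "measure_pmf.expectation (Xpmf xi N) (?P h) = (h True * (1 - x) + h False * x) ^ N"
      if "\<And>b. 0 \<le> h b \<and> h b \<le> 1" for h :: "bool \<Rightarrow> real"
      unfolding x_def q_def by (rule Eprod[OF m]) (use that in blast)+
    have E0: "measure_pmf.expectation (Xpmf xi N) (?P h0) = x ^ N"
      using E[of h0, OF hb(1)] by (simp add: h0_def)
    have E1: "measure_pmf.expectation (Xpmf xi N) (?P h1) = ((1 - pmf xi k) * (1 - x) + x) ^ N"
      using E[of h1, OF hb(2)] by (simp add: h1_def q_def)
    have E2: "measure_pmf.expectation (Xpmf xi N) (?P h2) = (1 - x) ^ N"
      using E[of h2, OF hb(3)] by (simp add: h2_def)
    show ?thesis by (simp only: E0 E1 E2)
  qed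
  also have "\<dots> \<le> \<beta> * (x + 1)"
    unfolding \<beta>_def q_def
  proof (rule arith_key[OF p(1) p(2) _ _ N big])
    show "0 \<le> x" using q01 by (simp add: x_def)
    have "1 \<le> m (phi m)" using phi_props(1)[OF m N] by simp
    then have "x \<le> q ^ 1" unfolding x_def using q01 by (intro power_decreasing) auto
    then show "x \<le> 1 - pmf xi k" by (simp add: q_def)
  qed
  also have "\<dots> = gfun q N m" by (simp add: gfun_def \<beta>_def x_def)
  finally show ?thesis unfolding q_def .
qed

lemma oplus_Omega: "1 \<le> N \<Longrightarrow> oplus k N \<in> Omega k N"
proof -
  assume N: "1 \<le> N"
  have "{l. oplus k N l \<noteq> 0} = {k}" using N by (auto simp: oplus_def)
  then show ?thesis by (auto simp: Omega_def oplus_def)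
qed

lemma eventually_big:
  fixes p :: real
  assumes "0 < p" "p < 1"
  shows "\<forall>\<^sub>F N in at_top. (2 * real N + 1) * (1 - p^2) ^ N \<le> 1"
proof -
  define r where "r = 1 - p^2"
  have r: "0 \<le> r" "r < 1" using assms by (auto simp: r_def power2_eq_square mult_le_one)
  have "(\<lambda>N. 2 * (real N * r ^ N) + r ^ N) \<longlonglongrightarrow> 2 * 0 + 0"
    by (intro tendsto_intros powser_times_n_limit_0) (use r in auto)
  then have "\<forall>\<^sub>F N in sequentially. 2 * (real N * r ^ N) + r ^ N < 1"
    by (intro order_tendstoD(2)) auto
  then show ?thesis
    by eventually_elim (simp add: r_def algebra_simps)
qed

lemma main_N:
  fixes xi :: "int pmf"
  assumes xi: "set_pmf xi \<subseteq> {..k}" and p: "0 < pmf xi k" "pmf xi k < 1" and N: "1 \<le> N"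
    and big: "(2 * real N + 1) * (1 - (pmf xi k)^2) ^ N \<le> 1"
  defines "G \<equiv> 4 * (1 - pmf xi k) ^ (N - 1)"
  shows "(\<lambda>n. hit_before (step xi N) (oplus k N) {n} (oplus k N)) summable_on Omega0 k N \<and>
         hit_before (step xi N) (oplus k N) (Omega0 k N) (oplus k N) \<le> (\<Sum>\<^sub>\<infinity>n\<in>Omega0 k N. hit_before (step xi N) (oplus k N) {n} (oplus k N)) \<and>
         (\<Sum>\<^sub>\<infinity>n\<in>Omega0 k N. hit_before (step xi N) (oplus k N) {n} (oplus k N)) \<le> (1 + G) * hit_before (step xi N) (oplus k N) (Omega0 k N) (oplus k N)"
proof -
  define q where "q = 1 - pmf xi k"
  have q01: "0 \<le> q" "q \<le> 1" using p by (auto simp: q_def)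
  interpret inv_chain "step xi N" "Omega k N"
  proof
    fix m assume m: "m \<in> Omega k N"
    show "set_pmf (step xi N m) \<subseteq> Omega k N"
      unfolding step_Phi using Phi_props(1)[OF m N _ xi] by auto
  qed
  have G0: "0 \<le> G" using q01 by (simp add: G_def q_def)
  have VG: "Vf (step xi N) (Omega0 k N) (oplus k N) t m \<le> G" if m: "m \<in> Omega k N" for t m
  proof -
    have "Vf (step xi N) (Omega0 k N) (oplus k N) t m \<le> gfun q N m"
    proof (rule Vf_le_lyap[OF _ _ _ m])
      fix m' assume m': "m' \<in> Omega k N"
      show "0 \<le> gfun q N m'" using gfun_bounds[OF q01] by blast
      show "integrable (measure_pmf (step xi N m')) (gfun q N)"
        by (rule int_bounded[where B="4 * q ^ (N - 1)"]) (use gfun_bounds[OF q01] in \<open>auto simp: abs_le_iff\<close>)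
      show "measure_pmf.expectation (step xi N m')
          (\<lambda>m''. if m'' = oplus k N then 0 else indicator (Omega0 k N) m'' + gfun q N m'') \<le> gfun q N m'"
        unfolding q_def by (rule lyap[OF xi p N big m'])
    qed
    also have "\<dots> \<le> G" using gfun_bounds[OF q01] by (simp add: G_def q_def)
    finally show ?thesis .
  qed
  show ?thesis by (rule sum_bound[OF G0 VG oplus_Omega[OF N]])
qed

theorem lemma6p6:
  fixes k :: int and xi :: "int pmf"
  assumes "set_pmf xi \<subseteq> {..k}" and "0 < pmf xi k" and "pmf xi k < 1"
  shows "\<exists>C>0. \<exists>\<epsilon>::nat \<Rightarrow> real. \<epsilon> \<in> O(\<lambda>N. exp (- C * real N)) \<and>
    (\<forall>\<^sub>F N in at_top.
       (\<lambda>n. hit_before (step xi N) (oplus k N) {n} (oplus k N)) summable_on Omega0 k N \<and>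
       (\<Sum>\<^sub>\<infinity>n\<in>Omega0 k N. hit_before (step xi N) (oplus k N) {n} (oplus k N))
         = hit_before (step xi N) (oplus k N) (Omega0 k N) (oplus k N) * (1 + \<epsilon> N))"
proof -
  define q where "q = 1 - pmf xi k"
  have q: "0 < q" "q < 1" using assms by (auto simp: q_def)
  define C where "C = - ln q"
  have C: "0 < C" using q by (simp add: C_def)
  define H where "H N = hit_before (step xi N) (oplus k N) (Omega0 k N) (oplus k N)" for N
  define S where "S N = (\<Sum>\<^sub>\<infinity>n\<in>Omega0 k N. hit_before (step xi N) (oplus k N) {n} (oplus k N))" for N
  define \<epsilon> where "\<epsilon> N = (if H N = 0 then 0 else S N / H N - 1)" for N
  have ev: "\<forall>\<^sub>F N in at_top. 1 \<le> N \<and> (2 * real N + 1) * (1 - (pmf xi k)^2) ^ N \<le> 1"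
    using eventually_big[OF assms(2,3)] eventually_ge_at_top[of "1::nat"] by eventually_elim auto
  have key: "(\<lambda>n. hit_before (step xi N) (oplus k N) {n} (oplus k N)) summable_on Omega0 k N \<and>
      S N = H N * (1 + \<epsilon> N) \<and> \<bar>\<epsilon> N\<bar> \<le> 4 * q ^ (N - 1)"
    if N: "1 \<le> N \<and> (2 * real N + 1) * (1 - (pmf xi k)^2) ^ N \<le> 1" for N
  proof -
    have mN: "(\<lambda>n. hit_before (step xi N) (oplus k N) {n} (oplus k N)) summable_on Omega0 k N"
        "H N \<le> S N" "S N \<le> (1 + 4 * q ^ (N - 1)) * H N"
      using main_N[OF assms N[THEN conjunct1] N[THEN conjunct2]] unfolding H_def S_def q_def by blast+
    have H0: "0 \<le> H N" unfolding H_def by (rule hit_before_nonneg)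
    show ?thesis
    proof (cases "H N = 0")
      case True
      then have "S N = 0" using mN by simp
      then show ?thesis using True mN q by (simp add: \<epsilon>_def)
    next
      case False
      then have Hp: "0 < H N" using H0 by simp
      have "1 \<le> S N / H N" using mN Hp by (simp add: field_simps)
      moreover have "S N / H N \<le> 1 + 4 * q ^ (N - 1)" using mN Hp by (simp add: field_simps)
      ultimately have "\<bar>\<epsilon> N\<bar> \<le> 4 * q ^ (N - 1)" using False by (simp add: \<epsilon>_def)
      moreover have "S N = H N * (1 + \<epsilon> N)" using False by (simp add: \<epsilon>_def)
      ultimately show ?thesis using mN by blast
    qed
  qed
  have bo: "\<epsilon> \<in> O(\<lambda>N. exp (- C * real N))"
  proof (rule bigoI[where c="4 / q"])
    show "\<forall>\<^sub>F N in at_top. norm (\<epsilon> N) \<le> 4 / q * norm (exp (- C * real N))"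
      using ev
    proof eventually_elim
      case (elim N)
      have "exp (- C * real N) = q ^ N" using q by (simp add: C_def exp_of_nat_mult[symmetric] mult.commute)
        (metis exp_ln exp_of_nat_mult mult.commute)
      moreover have "q ^ N = q * q ^ (N - 1)" using elim by (metis Suc_diff_le diff_Suc_1 power_Suc)
      ultimately have "4 / q * norm (exp (- C * real N)) = 4 * q ^ (N - 1)" using q by simp
      then show ?case using key[OF elim] by simp
    qed
  qed
  show ?thesis
    using C bo ev key unfolding H_def S_def
    by (intro exI[of _ C] conjI exI[of _ \<epsilon>]) (auto elim!: eventually_mono)
qed

end
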